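(* (Extended Lucas Theorem.) Let $n$ be a prime, let $m \geq n$ be an integer and let $k$ be an integer with $0 \leq k \leq m$. Write $m=\sum_{i=0}^r m_i n^i$ and $k=\sum_{i=0}^r k_i n^i$ in base $n$, where $r$ is a suitable nonnegative integer and $0 \leq m_i < n$, $0 \leq k_i < n$ are integers for each $i=0,1,\dots,r$. For each $i$ set $t_i=\min\{k_i,\, m_i-k_i\}$ and define \[ \binom{m_i}{t_i}_n := \begin{cases} (-1)^{t_i} \binom{n-1-m_i+t_i}{n-1-m_i} , & \text{if } m_i+t_i > n- 1,\\ (-1)^{t_i} \binom{n-1-m_i+t_i}{t_i}, & \text{if } m_i+t_i \leq n- 1 \text{ and } 2 m_i > n-1 +t_i,\\ \binom{m_i}{t_i}, & \text{otherwise}. \end{cases} \] Then \[ \binom{m}{k} \equiv \binom{m_r}{t_r}_n \binom{m-m_r n^r}{k-k_r n^r} \pmod{n}, \] and moreover \[ \binom{m}{k} \equiv \binom{m_r}{t_r}_n \binom{m_{r-1}}{t_{r-1}}_n \cdots \binom{m_1}{t_1}_n \binom{m_0}{t_0}_n \pmod{n}. \]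
   Context: Binomial coefficients $\binom{a}{b}$ with integer $a\ge 0$ follow the usual convention that $\binom{a}{b}=0$ if $b<0$ or $b>a$. *)

theory Defs
  imports Main "HOL-Number_Theory.Cong"
begin

definition binz :: "int \<Rightarrow> int \<Rightarrow> int" where
  "binz a b = (if b < 0 \<or> b > a then 0 else int (nat a choose nat b))"

text \<open>The modified coefficient (m_i choose t_i)_n of the paper; (-1)^t is rendered
  as (-1)^(nat |t|), which has the same value for every integer t.\<close>
definition gbin :: "nat \<Rightarrow> int \<Rightarrow> int \<Rightarrow> int" where
  "gbin n mi ti =
     (if mi + ti > int n - 1 then (-1) ^ nat \<bar>ti\<bar> * binz (int n - 1 - mi + ti) (int n - 1 - mi)
      else if 2 * mi > int n - 1 + ti then (-1) ^ nat \<bar>ti\<bar> * binz (int n - 1 - mi + ti) ti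
      else binz mi ti)"

end

theory Submission imports Defs "HOL-Computational_Algebra.Primes" begin

lemma sucdm1: fixes m p :: nat assumes "Suc (m mod p) \<noteq> p" "p > 1"
  shows "Suc m div p = m div p" "Suc m mod p = Suc (m mod p)"
proof -
  show e: "Suc m mod p = Suc (m mod p)" using assms by (simp add: mod_Suc)
  show "Suc m div p = m div p" using assms e by (subst div_Suc) simp
qed
lemma sucdm2: fixes m p :: nat assumes "Suc (m mod p) = p" "p > 1"
  shows "Suc m div p = Suc (m div p)" "Suc m mod p = 0"
proof -
  show e: "Suc m mod p = 0" using assms by (simp add: mod_Suc)
  show "Suc m div p = Suc (m div p)" using assms e by (subst div_Suc) simp
qed

lemma lucas_step:
  fixes p m k :: nat assumes p: "prime p"
  shows "[m choose k = (m div p choose k div p) * (m mod p choose k mod p)] (mod p)"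
proof (induction m arbitrary: k)
  case 0
  show ?case
  proof (cases "k = 0")
    case False
    then have "k div p \<noteq> 0 \<or> k mod p \<noteq> 0" using div_mult_mod_eq[of k p] by (cases "k div p = 0") simp_all
    then have A: "(0 choose k div p) * (0 choose k mod p) = 0" by (cases "k div p = 0") simp_all
    have B: "(0::nat) choose k = 0" using False by simp
    show ?thesis unfolding div_0 mod_0 A B by (rule cong_refl)
  qed simp
next
  case (Suc m)
  show ?case
  proof (cases k)
    case 0 then show ?thesis by simp
  next
    case (Suc j)
    have p1: "p > 1" using p prime_gt_1_nat by blast
    define a where "a = m div p"
    define b where "b = m mod p"
    define c where "c = j div p"
    define d where "d = j mod p"
    have bp: "b < p" "d < p" using p1 unfolding b_def d_def by auto
    have IH1: "[m choose j = (a choose c) * (b choose d)] (mod p)" unfolding a_def b_def c_def d_def by (rule Suc.IH)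
    have IH2: "[m choose Suc j = (a choose Suc j div p) * (b choose Suc j mod p)] (mod p)" unfolding a_def b_def by (rule Suc.IH)
    have pas: "Suc m choose k = (m choose j) + (m choose Suc j)" unfolding \<open>k = Suc j\<close> by (rule binomial_Suc_Suc)
    have sum: "[Suc m choose k = (a choose c) * (b choose d) + (a choose Suc j div p) * (b choose Suc j mod p)] (mod p)"
      unfolding pas by (rule cong_add[OF IH1 IH2])
    show ?thesis
    proof (cases "Suc b = p")
      case False
      then have mm: "Suc m div p = a" "Suc m mod p = Suc b" using sucdm1[of m p] sucdm2[of m p] p1 unfolding a_def b_def by auto
      show ?thesis
      proof (cases "Suc d = p")
        case False
        then have jj: "Suc j div p = c" "Suc j mod p = Suc d" using sucdm1[of j p] sucdm2[of j p] p1 unfolding c_def d_def by auto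
        have eq: "(a choose c) * (b choose d) + (a choose Suc j div p) * (b choose Suc j mod p)
          = (Suc m div p choose k div p) * (Suc m mod p choose k mod p)"
          unfolding \<open>k = Suc j\<close> mm jj by (simp add: algebra_simps)
        show ?thesis using sum unfolding eq .
      next
        case True
        then have jj: "Suc j div p = Suc c" "Suc j mod p = 0" using sucdm1[of j p] sucdm2[of j p] p1 unfolding c_def d_def by auto
        have "b choose d = 0" using True False bp by simp
        then have eq: "(a choose c) * (b choose d) + (a choose Suc j div p) * (b choose Suc j mod p)
          = (Suc m div p choose k div p) * (Suc m mod p choose k mod p)"
          unfolding \<open>k = Suc j\<close> mm jj by simp
        show ?thesis using sum unfolding eq .
      qed
    next
      case True
      then have mm: "Suc m div p = Suc a" "Suc m mod p = 0" using sucdm1[of m p] sucdm2[of m p] p1 unfolding a_def b_def by auto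
      show ?thesis
      proof (cases "Suc d = p")
        case False
        then have jj: "Suc j div p = c" "Suc j mod p = Suc d" using sucdm1[of j p] sucdm2[of j p] p1 unfolding c_def d_def by auto
        have "p dvd (p choose Suc d)" using dvd_choose_prime[OF _ _ _ p] False bp by simp
        then have "[(b choose d) + (b choose Suc d) = 0] (mod p)"
          using True binomial_Suc_Suc[of b d] by (simp add: cong_0_iff)
        then have "[(a choose c) * ((b choose d) + (b choose Suc d)) = (a choose c) * 0] (mod p)"
          by (rule cong_mult[OF cong_refl])
        then have c1: "[(a choose c) * (b choose d) + (a choose Suc j div p) * (b choose Suc j mod p) = 0] (mod p)"
          unfolding jj by (simp add: algebra_simps)
        have eq: "(Suc m div p choose k div p) * (Suc m mod p choose k mod p) = 0"
          unfolding \<open>k = Suc j\<close> mm jj by simp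
        show ?thesis unfolding eq using cong_trans[OF sum c1] .
      next
        case True2: True
        then have jj: "Suc j div p = Suc c" "Suc j mod p = 0" using sucdm1[of j p] sucdm2[of j p] p1 unfolding c_def d_def by auto
        have "d = b" using True True2 by simp
        then have eq: "(a choose c) * (b choose d) + (a choose Suc j div p) * (b choose Suc j mod p)
          = (Suc m div p choose k div p) * (Suc m mod p choose k mod p)"
          unfolding \<open>k = Suc j\<close> mm jj by simp
        show ?thesis using sum unfolding eq .
      qed
    qed
  qed
qed


lemma sign_helper:
  fixes a b X Y :: int
  assumes "a * X = b * Y"
  shows "a * ((-1) ^ Suc t * X) = - b * ((-1) ^ t * Y)"
proof -
  have "a * ((-1) ^ Suc t * X) = - ((-1) ^ t * (a * X))" by (simp add: algebra_simps)
  also have "\<dots> = - ((-1) ^ t * (b * Y))" using assms by simp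
  finally show ?thesis by (simp add: algebra_simps)
qed

lemma choose_step: "Suc t * (m choose Suc t) = (m - t) * (m choose t)"
  using binomial_absorption[of t m] binomial_absorb_comp[of m t] by simp

lemma neg_binom:
  fixes p m t :: nat
  assumes p: "prime p" and mp: "m < p"
  shows "t \<le> m \<Longrightarrow> [(-1) ^ t * int ((p - 1 - m + t) choose t) = int (m choose t)] (mod int p)"
proof (induction t)
  case 0 then show ?case by simp
next
  case (Suc t)
  define q where "q = p - 1 - m"
  have tm: "t \<le> m" "Suc t \<le> m" using Suc.prems by auto
  have IH: "[(-1) ^ t * int ((q + t) choose t) = int (m choose t)] (mod int p)"
    using Suc.IH tm unfolding q_def by simp
  have e1: "Suc t * ((Suc (q + t)) choose Suc t) = Suc (q + t) * ((q + t) choose t)"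
    by (rule Suc_times_binomial)
  have e2: "Suc t * (m choose Suc t) = (m - t) * (m choose t)" by (rule choose_step)
  have L: "int (Suc t) * ((-1) ^ Suc t * int ((q + Suc t) choose Suc t))
      = - int (Suc (q + t)) * ((-1) ^ t * int ((q + t) choose t))"
  proof -
    have "int (Suc t) * int ((q + Suc t) choose Suc t) = int (Suc (q + t)) * int ((q + t) choose t)"
      using e1 by (metis add_Suc_right of_nat_mult)
    then show ?thesis by (rule sign_helper)
  qed
  have c1: "[- int (Suc (q + t)) * ((-1) ^ t * int ((q + t) choose t)) = - int (Suc (q + t)) * int (m choose t)] (mod int p)"
    by (rule cong_mult[OF cong_refl IH])
  have qq: "- int (Suc (q + t)) = int (m - t) - int p" using mp tm unfolding q_def by simp
  have c2: "[- int (Suc (q + t)) = int (m - t)] (mod int p)"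
    unfolding qq by (simp add: cong_iff_dvd_diff)
  have c3: "[- int (Suc (q + t)) * int (m choose t) = int (m - t) * int (m choose t)] (mod int p)"
    by (rule cong_mult[OF c2 cong_refl])
  have R: "int (m - t) * int (m choose t) = int (Suc t) * int (m choose Suc t)"
    using e2 by (metis of_nat_mult)
  have "[int (Suc t) * ((-1) ^ Suc t * int ((q + Suc t) choose Suc t)) = int (Suc t) * int (m choose Suc t)] (mod int p)"
    using cong_trans[OF c1 c3] unfolding L R .
  moreover have "coprime (int (Suc t)) (int p)"
    using p tm mp by (meson coprime_commute coprime_int_iff dvd_imp_le order.strict_iff_not prime_imp_coprime_nat le_less_trans zero_less_Suc not_less)
  ultimately have "[(-1) ^ Suc t * int ((q + Suc t) choose Suc t) = int (m choose Suc t)] (mod int p)"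
    using cong_mult_lcancel by blast
  then show ?case unfolding q_def .
qed

lemma lucas_digits:
  fixes p r :: nat and md kd :: "nat \<Rightarrow> nat"
  assumes p: "prime p"
  shows "(\<And>i. i < r \<Longrightarrow> md i < p) \<Longrightarrow> (\<And>i. i < r \<Longrightarrow> kd i < p) \<Longrightarrow>
    [(\<Sum>i<r. md i * p ^ i) choose (\<Sum>i<r. kd i * p ^ i) = (\<Prod>i<r. md i choose kd i)] (mod p)"
proof (induction r arbitrary: md kd)
  case 0 then show ?case by simp
next
  case (Suc r)
  define M where "M = (\<Sum>i<r. md (Suc i) * p ^ i)"
  define K where "K = (\<Sum>i<r. kd (Suc i) * p ^ i)"
  have p0: "p > 0" using p prime_gt_0_nat by blast
  have sM: "(\<Sum>i<Suc r. md i * p ^ i) = md 0 + p * M"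
    unfolding sum.lessThan_Suc_shift M_def by (simp add: sum_distrib_left algebra_simps)
  have sK: "(\<Sum>i<Suc r. kd i * p ^ i) = kd 0 + p * K"
    unfolding sum.lessThan_Suc_shift K_def by (simp add: sum_distrib_left algebra_simps)
  have d0: "md 0 < p" "kd 0 < p" using Suc.prems by auto
  have dm: "(md 0 + p * M) div p = M" "(md 0 + p * M) mod p = md 0"
    "(kd 0 + p * K) div p = K" "(kd 0 + p * K) mod p = kd 0" using d0 p0 by auto
  have st: "[(md 0 + p * M) choose (kd 0 + p * K) = (M choose K) * (md 0 choose kd 0)] (mod p)"
    using lucas_step[OF p, of "md 0 + p * M" "kd 0 + p * K"] unfolding dm .
  have IH: "[M choose K = (\<Prod>i<r. md (Suc i) choose kd (Suc i))] (mod p)"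
    unfolding M_def K_def by (rule Suc.IH) (use Suc.prems in auto)
  have "[(M choose K) * (md 0 choose kd 0) = (\<Prod>i<r. md (Suc i) choose kd (Suc i)) * (md 0 choose kd 0)] (mod p)"
    by (rule cong_mult[OF IH cong_refl])
  then show ?case unfolding sM sK prod.lessThan_Suc_shift using cong_trans[OF st]
    by (simp add: mult.commute)
qed
lemma gbin_cong:
  fixes n mi ki :: nat and t :: int
  assumes p: "prime n" and mi: "mi < n" and ki: "ki < n"
    and t: "t = min (int ki) (int mi - int ki)"
  shows "[gbin n (int mi) t = int (mi choose ki)] (mod int n)"
proof (cases "ki \<le> mi")
  case True
  define tn where "tn = nat t"
  have tt: "t = int tn" using t True unfolding tn_def by simp
  have tnm: "tn \<le> mi" using t True unfolding tn_def by simp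
  have cc: "mi choose tn = mi choose ki"
  proof (cases "int ki \<le> int mi - int ki")
    case True
    then have "tn = ki" using t unfolding tn_def by simp
    then show ?thesis by simp
  next
    case False
    then have "tn = mi - ki" using t \<open>ki \<le> mi\<close> unfolding tn_def by simp
    then show ?thesis using \<open>ki \<le> mi\<close> binomial_symmetric by metis
  qed
  define q where "q = n - 1 - mi"
  have qi: "int n - 1 - int mi = int q" using mi unfolding q_def by simp
  have sg: "(-1::int) ^ nat \<bar>t\<bar> = (-1) ^ tn" unfolding tt by simp
  have b1: "binz (int n - 1 - int mi + t) (int n - 1 - int mi) = int ((q + tn) choose tn)"
    unfolding qi tt binz_def using binomial_symmetric[of q "q + tn"] by (simp add: nat_add_distrib)
  have b2: "binz (int n - 1 - int mi + t) t = int ((q + tn) choose tn)"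
    unfolding qi tt binz_def by (simp add: nat_add_distrib)
  have b3: "binz (int mi) t = int (mi choose tn)"
    unfolding tt binz_def using tnm by simp
  have NB: "[(-1) ^ tn * int ((q + tn) choose tn) = int (mi choose ki)] (mod int n)"
    using neg_binom[OF p mi tnm] cc unfolding q_def by simp
  show ?thesis
    unfolding gbin_def sg b1 b2 b3 cc using NB by simp
next
  case False
  then have tneg: "t = int mi - int ki" "t < 0" using t by auto
  have G: "gbin n (int mi) t = 0"
    unfolding gbin_def binz_def using tneg mi ki by auto
  have C: "mi choose ki = 0" using False by simp
  show ?thesis unfolding G C by simp
qed

theorem theorem1p2:
  fixes n m k r :: nat and md kd :: "nat \<Rightarrow> nat" and t :: "nat \<Rightarrow> int"
  assumes "prime n"
    and "m \<ge> n"
    and "k \<le> m"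
    and "m = (\<Sum>i\<le>r. md i * n ^ i)"
    and "k = (\<Sum>i\<le>r. kd i * n ^ i)"
    and "\<And>i. i \<le> r \<Longrightarrow> md i < n"
    and "\<And>i. i \<le> r \<Longrightarrow> kd i < n"
    and "\<And>i. t i = min (int (kd i)) (int (md i) - int (kd i))"
  shows "[int (m choose k) = gbin n (int (md r)) (t r)
            * binz (int m - int (md r) * int n ^ r) (int k - int (kd r) * int n ^ r)] (mod int n) \<and>
         [int (m choose k) = (\<Prod>i\<le>r. gbin n (int (md i)) (t i))] (mod int n)"
proof -
  note p = assms(1)
  have G: "[gbin n (int (md i)) (t i) = int (md i choose kd i)] (mod int n)" if "i \<le> r" for i
    using gbin_cong[OF p assms(6)[OF that] assms(7)[OF that] assms(8)[of i]] .
  have mS: "m = (\<Sum>i<Suc r. md i * n ^ i)" using assms(4) lessThan_Suc_atMost by simp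
  have kS: "k = (\<Sum>i<Suc r. kd i * n ^ i)" using assms(5) lessThan_Suc_atMost by simp
  have L: "[m choose k = (\<Prod>i<Suc r. md i choose kd i)] (mod n)"
    unfolding mS kS by (rule lucas_digits[OF p]) (use assms(6,7) in auto)
  have P2: "[int (m choose k) = (\<Prod>i\<le>r. gbin n (int (md i)) (t i))] (mod int n)"
  proof -
    have "[int (m choose k) = int (\<Prod>i<Suc r. md i choose kd i)] (mod int n)"
      using L cong_int_iff by blast
    also have "int (\<Prod>i<Suc r. md i choose kd i) = (\<Prod>i\<le>r. int (md i choose kd i))"
      unfolding int_prod lessThan_Suc_atMost ..
    also have "[(\<Prod>i\<le>r. int (md i choose kd i)) = (\<Prod>i\<le>r. gbin n (int (md i)) (t i))] (mod int n)"
      by (rule cong_prod) (use G in \<open>auto intro: cong_sym\<close>)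
    finally show ?thesis .
  qed
  define m' where "m' = (\<Sum>i<r. md i * n ^ i)"
  define k' where "k' = (\<Sum>i<r. kd i * n ^ i)"
  have mm: "m = m' + md r * n ^ r" unfolding mS m'_def by simp
  have kk: "k = k' + kd r * n ^ r" unfolding kS k'_def by simp
  have L': "[m' choose k' = (\<Prod>i<r. md i choose kd i)] (mod n)"
    unfolding m'_def k'_def by (rule lucas_digits[OF p]) (use assms(6,7) in auto)
  have "[m choose k = (md r choose kd r) * (\<Prod>i<r. md i choose kd i)] (mod n)"
    using L by (simp add: mult.commute)
  also have "[(md r choose kd r) * (\<Prod>i<r. md i choose kd i) = (md r choose kd r) * (m' choose k')] (mod n)"
    by (rule cong_mult[OF cong_refl cong_sym[OF L']])
  finally have L1: "[int (m choose k) = int (md r choose kd r) * int (m' choose k')] (mod int n)"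
    using cong_int_iff by (metis of_nat_mult)
  have e1: "int m - int (md r) * int n ^ r = int m'" using mm by simp
  have e2: "int k - int (kd r) * int n ^ r = int k'" using kk by simp
  have bz: "binz (int m') (int k') = int (m' choose k')"
    unfolding binz_def by simp
  have "[int (md r choose kd r) * int (m' choose k') = gbin n (int (md r)) (t r) * int (m' choose k')] (mod int n)"
    by (rule cong_mult[OF cong_sym[OF G] cong_refl]) simp
  with L1 have P1: "[int (m choose k) = gbin n (int (md r)) (t r)
            * binz (int m - int (md r) * int n ^ r) (int k - int (kd r) * int n ^ r)] (mod int n)"
    unfolding e1 e2 bz by (rule cong_trans)
  show ?thesis using P1 P2 by blast
qed

end
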